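(* Let $p>1$ and $q\ge p+1$, and let $f_{p,q}(t)=\sum_{j=1}^\infty j^{-p}\exp(i t j^q)$ for $t\in\mathbb{R}$. Then $f_{p,q}$, $\operatorname{Re}f_{p,q}$ and $\operatorname{Im}f_{p,q}$ are continuous on $\mathbb{R}$ but differentiable at no point. If moreover $q>p+1$, then none of them is Lipschitz continuous at any point of $\mathbb{R}$.
   Context: A function $g\colon\mathbb{R}\to\mathbb{C}$ is Lipschitz continuous at $t_0$ if there exist constants $L>0$, $\eta>0$ such that $|g(t)-g(t_0)|\le L|t-t_0|$ for all $t\in\,]t_0-\eta,t_0+\eta[$. *)

theory Defs
  imports "HOL-Analysis.Analysis"
begin

text \<open>f_{p,q}(t) = sum over j \<ge> 1 of j^(-p) exp(i t j^q); the index j = Suc k ranges over k :: nat.\<close>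
definition fpq :: "real \<Rightarrow> real \<Rightarrow> real \<Rightarrow> complex" where
  "fpq p q t = (\<Sum>k. complex_of_real (real (Suc k) powr (- p))
                      * exp (\<i> * complex_of_real (t * real (Suc k) powr q)))"

definition lipschitz_at :: "(real \<Rightarrow> 'a::real_normed_vector) \<Rightarrow> real \<Rightarrow> bool" where
  "lipschitz_at g t0 \<longleftrightarrow> (\<exists>L>0. \<exists>\<eta>>0. \<forall>t. t0 - \<eta> < t \<and> t < t0 + \<eta> \<longrightarrow>
       norm (g t - g t0) \<le> L * \<bar>t - t0\<bar>)"

end

theory Submission
  imports Defs
begin


definition E :: "real \<Rightarrow> real \<Rightarrow> complex" where
  "E \<mu> x = exp (\<i> * complex_of_real (\<mu> * x))"

definition phi :: "real \<Rightarrow> complex" where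
  "phi y = (if y = 0 then 1 else (exp (\<i> * complex_of_real y) - 1) / (\<i> * complex_of_real y))"

definition ser :: "(nat \<Rightarrow> complex) \<Rightarrow> (nat \<Rightarrow> real) \<Rightarrow> real \<Rightarrow> complex" where
  "ser c \<mu> x = (\<Sum>k. c k * E (\<mu> k) x)"

definition avg :: "real \<Rightarrow> (real \<Rightarrow> complex) \<Rightarrow> real \<Rightarrow> complex" where
  "avg h G x = integral {x..x+h} G / complex_of_real h"

lemma norm_E [simp]: "norm (E \<mu> x) = 1"
  unfolding E_def by (simp add: norm_exp_i_times)

lemma E_0 [simp]: "E \<mu> 0 = 1" unfolding E_def by simp

lemma cont_E [continuous_intros]: "continuous_on S (E \<mu>)"
  unfolding E_def by (intro continuous_intros)

lemma int_E:
  assumes "h > 0"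
  shows "(E \<mu> has_integral (complex_of_real h * phi (\<mu> * h) * E \<mu> x)) {x..x+h}"
proof (cases "\<mu> = 0")
  case True
  have "E \<mu> = (\<lambda>_. 1)" using True by (simp add: E_def fun_eq_iff)
  then show ?thesis using assms True has_integral_const_real[of "1::complex" x "x+h"]
    by (simp add: phi_def scaleR_conv_of_real)
next
  case False
  have d: "((\<lambda>u. E \<mu> u / (\<i> * complex_of_real \<mu>)) has_vector_derivative E \<mu> u) (at u within {x..x+h})" for u
  proof -
    have "((\<lambda>z. exp (\<i> * (complex_of_real \<mu> * z)) / (\<i> * complex_of_real \<mu>)) has_field_derivative
        exp (\<i> * (complex_of_real \<mu> * complex_of_real u))) (at (complex_of_real u))"
      using False by (auto intro!: derivative_eq_intros simp: field_simps)
    from has_vector_derivative_real_field[OF this, of "{x..x+h}"] show ?thesis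
      by (simp add: E_def mult.commute)
  qed
  have "(E \<mu> has_integral (E \<mu> (x+h) / (\<i> * complex_of_real \<mu>) - E \<mu> x / (\<i> * complex_of_real \<mu>))) {x..x+h}"
    by (rule fundamental_theorem_of_calculus) (use assms d in auto)
  moreover have "E \<mu> (x+h) / (\<i> * complex_of_real \<mu>) - E \<mu> x / (\<i> * complex_of_real \<mu>)
      = complex_of_real h * phi (\<mu> * h) * E \<mu> x"
    using False assms by (simp add: E_def phi_def field_simps exp_add[symmetric] distrib_left)
  ultimately show ?thesis by simp
qed

lemma norm_phi_le1: "norm (phi y) \<le> 1"
proof -
  have "(E y has_integral (complex_of_real 1 * phi (y * 1) * E y 0)) {0..0+1}"
    by (rule int_E) simp
  then have "(E y has_integral phi y) (cbox 0 1)" by simp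
  from has_integral_bound[OF _ this, of 1] show ?thesis by simp
qed

lemma norm_phi_le2: "y \<noteq> 0 \<Longrightarrow> norm (phi y) \<le> 2 / \<bar>y\<bar>"
proof -
  assume y: "y \<noteq> 0"
  have "norm (exp (\<i> * complex_of_real y) - 1) \<le> norm (exp (\<i> * complex_of_real y)) + norm (1::complex)"
    by (rule norm_triangle_ineq4)
  also have "\<dots> = 2" by (simp add: norm_exp_i_times)
  finally have "norm (exp (\<i> * complex_of_real y) - 1) \<le> 2" .
  then show ?thesis using y
    by (simp add: phi_def norm_divide norm_mult divide_right_mono)
qed

lemma summable_norm_phi:
  assumes "summable (\<lambda>k. norm (c k))"
  shows "summable (\<lambda>k. norm (c k * phi (\<mu> k * h) ^ m))"
  by (rule summable_comparison_test[OF _ assms])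
     (auto intro!: exI[of _ 0] simp: norm_mult norm_power intro!: mult_left_le power_le_one norm_phi_le1)

lemma unif_ser:
  assumes "summable (\<lambda>k. norm (c k))"
  shows "uniform_limit S (\<lambda>N x. \<Sum>k<N. c k * E (\<mu> k) x) (ser c \<mu>) sequentially"
proof -
  have "uniform_limit S (\<lambda>N x. \<Sum>k<N. c k * E (\<mu> k) x) (\<lambda>x. suminf (\<lambda>k. c k * E (\<mu> k) x)) sequentially"
    by (rule Weierstrass_m_test[OF _ assms]) (simp add: norm_mult)
  then show ?thesis unfolding ser_def[abs_def] .
qed

lemma cont_ser [continuous_intros]:
  assumes "summable (\<lambda>k. norm (c k))"
  shows "continuous_on S (ser c \<mu>)"
  by (rule uniform_limit_theorem[OF _ unif_ser[OF assms]]) (auto intro!: always_eventually continuous_intros)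

lemma summable_ser_terms:
  assumes "summable (\<lambda>k. norm (c k))"
  shows "summable (\<lambda>k. c k * E (\<mu> k) x)"
  by (rule summable_norm_cancel) (use assms in \<open>simp add: norm_mult\<close>)

lemma avg_ser:
  assumes "summable (\<lambda>k. norm (c k))" "h > 0"
  shows "avg h (ser c \<mu>) x = ser (\<lambda>k. c k * phi (\<mu> k * h)) \<mu> x"
proof -
  obtain I J where I: "\<And>N. ((\<lambda>u. \<Sum>k<N. c k * E (\<mu> k) u) has_integral I N) {x..x+h}"
    and J: "(ser c \<mu> has_integral J) {x..x+h}" and IJ: "I \<longlonglongrightarrow> J"
    by (rule uniform_limit_integral[OF unif_ser[OF assms(1), where S="{x..x+h}" and \<mu>=\<mu>]]) (auto intro!: continuous_intros)
  have "((\<lambda>u. \<Sum>k<N. c k * E (\<mu> k) u) has_integral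
      (\<Sum>k<N. c k * (complex_of_real h * phi (\<mu> k * h) * E (\<mu> k) x))) {x..x+h}" for N
    by (intro has_integral_sum has_integral_mult_right int_E assms) auto
  then have I': "I N = complex_of_real h * (\<Sum>k<N. c k * phi (\<mu> k * h) * E (\<mu> k) x)" for N
    using I[of N] by (simp add: has_integral_unique sum_distrib_left mult_ac)
  have s: "summable (\<lambda>k. c k * phi (\<mu> k * h) * E (\<mu> k) x)"
    using summable_ser_terms[OF summable_norm_phi[OF assms(1), of \<mu> h 1], of \<mu> x] by simp
  have "I \<longlonglongrightarrow> complex_of_real h * ser (\<lambda>k. c k * phi (\<mu> k * h)) \<mu> x"
    unfolding I' ser_def by (intro tendsto_mult tendsto_const summable_LIMSEQ s)
  with IJ have "J = complex_of_real h * ser (\<lambda>k. c k * phi (\<mu> k * h)) \<mu> x"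
    using LIMSEQ_unique by blast
  then show ?thesis using J assms(2) by (simp add: avg_def integral_unique)
qed

definition G3 where
  "G3 c1 \<mu>1 c2 \<mu>2 c3 \<mu>3 x = ser c1 \<mu>1 x + ser c2 \<mu>2 x + ser c3 \<mu>3 x"

definition cm :: "(nat \<Rightarrow> complex) \<Rightarrow> (nat \<Rightarrow> real) \<Rightarrow> real \<Rightarrow> nat \<Rightarrow> nat \<Rightarrow> complex" where
  "cm c \<mu> h m = (\<lambda>k. c k * phi (\<mu> k * h) ^ m)"

lemma summable_cm: "summable (\<lambda>k. norm (c k)) \<Longrightarrow> summable (\<lambda>k. norm (cm c \<mu> h m k))"
  unfolding cm_def by (rule summable_norm_phi)

lemma cont_G3:
  assumes "summable (\<lambda>k. norm (c1 k))" "summable (\<lambda>k. norm (c2 k))" "summable (\<lambda>k. norm (c3 k))"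
  shows "continuous_on S (G3 c1 \<mu>1 c2 \<mu>2 c3 \<mu>3)"
proof -
  have "continuous_on S (ser c1 \<mu>1)" "continuous_on S (ser c2 \<mu>2)" "continuous_on S (ser c3 \<mu>3)"
    using assms by (auto intro!: cont_ser)
  then show ?thesis unfolding G3_def[abs_def] by (intro continuous_on_add)
qed

lemma avg_add:
  assumes "continuous_on UNIV F1" "continuous_on UNIV F2"
  shows "avg h (\<lambda>x. F1 x + F2 x) x = avg h F1 x + avg h F2 x"
proof -
  have "F1 integrable_on {x..x+h}" "F2 integrable_on {x..x+h}"
    using continuous_on_subset[OF assms(1)] continuous_on_subset[OF assms(2)]
    by (auto intro!: integrable_continuous_interval)
  then have "integral {x..x+h} (\<lambda>x. F1 x + F2 x) = integral {x..x+h} F1 + integral {x..x+h} F2"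
    by (rule integral_add)
  then show ?thesis unfolding avg_def by (simp only: add_divide_distrib)
qed

lemma avg_G3:
  assumes s: "summable (\<lambda>k. norm (c1 k))" "summable (\<lambda>k. norm (c2 k))" "summable (\<lambda>k. norm (c3 k))"
    and h: "h > 0"
  shows "avg h (G3 c1 \<mu>1 c2 \<mu>2 c3 \<mu>3) x = G3 (cm c1 \<mu>1 h 1) \<mu>1 (cm c2 \<mu>2 h 1) \<mu>2 (cm c3 \<mu>3 h 1) \<mu>3 x"
proof -
  have c1: "continuous_on UNIV (ser c1 \<mu>1)" "continuous_on UNIV (ser c2 \<mu>2)" "continuous_on UNIV (ser c3 \<mu>3)"
    using s by (auto intro!: cont_ser)
  have c12: "continuous_on UNIV (\<lambda>x. ser c1 \<mu>1 x + ser c2 \<mu>2 x)"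
    using c1 by (intro continuous_on_add)
  have "avg h (G3 c1 \<mu>1 c2 \<mu>2 c3 \<mu>3) x = avg h (\<lambda>x. (ser c1 \<mu>1 x + ser c2 \<mu>2 x) + ser c3 \<mu>3 x) x"
    by (simp add: G3_def[abs_def])
  also have "\<dots> = avg h (\<lambda>x. ser c1 \<mu>1 x + ser c2 \<mu>2 x) x + avg h (ser c3 \<mu>3) x"
    by (rule avg_add[OF c12 c1(3)])
  also have "\<dots> = avg h (ser c1 \<mu>1) x + avg h (ser c2 \<mu>2) x + avg h (ser c3 \<mu>3) x"
    using avg_add[OF c1(1) c1(2)] by simp
  also have "\<dots> = G3 (cm c1 \<mu>1 h 1) \<mu>1 (cm c2 \<mu>2 h 1) \<mu>2 (cm c3 \<mu>3 h 1) \<mu>3 x"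
    unfolding G3_def using avg_ser[OF s(1) h] avg_ser[OF s(2) h] avg_ser[OF s(3) h]
    by (simp add: cm_def)
  finally show ?thesis .
qed

lemma cm_cm: "cm (cm c \<mu> h m) \<mu> h 1 = cm c \<mu> h (Suc m)"
  by (simp add: cm_def fun_eq_iff mult.assoc)

lemma iter_G3:
  assumes "summable (\<lambda>k. norm (c1 k))" "summable (\<lambda>k. norm (c2 k))" "summable (\<lambda>k. norm (c3 k))"
    and h: "h > 0"
  shows "(avg h ^^ m) (G3 c1 \<mu>1 c2 \<mu>2 c3 \<mu>3) = G3 (cm c1 \<mu>1 h m) \<mu>1 (cm c2 \<mu>2 h m) \<mu>2 (cm c3 \<mu>3 h m) \<mu>3"
proof (induction m)
  case 0
  then show ?case by (simp add: cm_def)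
next
  case (Suc m)
  have s: "summable (\<lambda>k. norm (cm c1 \<mu>1 h m k))" "summable (\<lambda>k. norm (cm c2 \<mu>2 h m k))"
    "summable (\<lambda>k. norm (cm c3 \<mu>3 h m k))" using assms by (auto intro: summable_cm)
  have "(avg h ^^ Suc m) (G3 c1 \<mu>1 c2 \<mu>2 c3 \<mu>3) = avg h ((avg h ^^ m) (G3 c1 \<mu>1 c2 \<mu>2 c3 \<mu>3))"
    by simp
  also have "\<dots> = avg h (G3 (cm c1 \<mu>1 h m) \<mu>1 (cm c2 \<mu>2 h m) \<mu>2 (cm c3 \<mu>3 h m) \<mu>3)"
    by (simp only: Suc.IH)
  also have "\<dots> = G3 (cm c1 \<mu>1 h (Suc m)) \<mu>1 (cm c2 \<mu>2 h (Suc m)) \<mu>2 (cm c3 \<mu>3 h (Suc m)) \<mu>3"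
    by (rule ext, simp only: avg_G3[OF s h] cm_cm)
  finally show ?case .
qed

lemma iter_bound:
  assumes "summable (\<lambda>k. norm (c1 k))" "summable (\<lambda>k. norm (c2 k))" "summable (\<lambda>k. norm (c3 k))"
    and h: "h > 0"
  shows "(\<forall>u\<in>{x..x + real m * h}. norm (G3 c1 \<mu>1 c2 \<mu>2 c3 \<mu>3 u) \<le> B) \<Longrightarrow>
     norm ((avg h ^^ m) (G3 c1 \<mu>1 c2 \<mu>2 c3 \<mu>3) x) \<le> B"
proof (induction m arbitrary: x)
  case 0
  then show ?case by simp
next
  case (Suc m)
  define F where "F = (avg h ^^ m) (G3 c1 \<mu>1 c2 \<mu>2 c3 \<mu>3)"
  have cF: "continuous_on UNIV F" unfolding F_def iter_G3[OF assms]
    using assms by (intro cont_G3 summable_cm)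
  have b: "norm (F u) \<le> B" if "u \<in> {x..x+h}" for u
    unfolding F_def
  proof (rule Suc.IH, intro ballI)
    fix v assume "v \<in> {u..u + real m * h}"
    then have "v \<in> {x..x + real (Suc m) * h}" using that h by (auto simp: algebra_simps)
    then show "norm (G3 c1 \<mu>1 c2 \<mu>2 c3 \<mu>3 v) \<le> B" using Suc.prems by blast
  qed
  have "norm (integral {x..x+h} F) \<le> integral {x..x+h} (\<lambda>_. B)"
    by (rule integral_norm_bound_integral)
       (use cF b continuous_on_subset[OF cF] in \<open>auto intro!: integrable_continuous_interval\<close>)
  also have "\<dots> = B * h" using h by simp
  finally have "norm (integral {x..x+h} F) \<le> B * h" .
  then have "norm (avg h F x) \<le> B" using h
    by (simp add: avg_def norm_divide divide_le_eq)
  then show ?case by (simp add: F_def)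
qed

lemma G3_0: "G3 c1 \<mu>1 c2 \<mu>2 c3 \<mu>3 0 = suminf c1 + suminf c2 + suminf c3"
  by (simp add: G3_def ser_def)

lemma suminf_pick:
  fixes f :: "nat \<Rightarrow> complex"
  assumes "summable f"
  shows "suminf f = f n + (\<Sum>k. if k = n then 0 else f k)" 
    and "summable (\<lambda>k. if k = n then 0 else f k)"
proof -
  have s1: "(\<lambda>k. if k = n then f k else 0) sums f n" by (rule sums_single)
  have eq: "(\<lambda>k. if k = n then 0 else f k) = (\<lambda>k. f k - (if k = n then f k else 0))" by auto
  show s2: "summable (\<lambda>k. if k = n then 0 else f k)"
    unfolding eq by (intro summable_diff assms sums_summable[OF s1])
  have "f = (\<lambda>k. (if k = n then f k else 0) + (if k = n then 0 else f k))" by auto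
  then have "suminf f = suminf (\<lambda>k. (if k = n then f k else 0) + (if k = n then 0 else f k))" by simp
  also have "\<dots> = f n + (\<Sum>k. if k = n then 0 else f k)"
    by (subst suminf_add[symmetric]) (use sums_summable[OF s1] s2 sums_unique[OF s1] in auto)
  finally show "suminf f = f n + (\<Sum>k. if k = n then 0 else f k)" .
qed

lemma extract_lem:
  assumes s: "summable (\<lambda>k. norm (c1 k))" "summable (\<lambda>k. norm (c2 k))" "summable (\<lambda>k. norm (c3 k))"
    and h: "h > 0" and z: "\<mu>1 n = 0"
    and B: "\<forall>u\<in>{0..real m * h}. norm (G3 c1 \<mu>1 c2 \<mu>2 c3 \<mu>3 u) \<le> B"
  shows "norm (c1 n) \<le> B + (\<Sum>k. if k = n then 0 else norm (c1 k) * norm (phi (\<mu>1 k * h)) ^ m)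
     + (\<Sum>k. norm (c2 k) * norm (phi (\<mu>2 k * h)) ^ m) + (\<Sum>k. norm (c3 k) * norm (phi (\<mu>3 k * h)) ^ m)"
proof -
  let ?V = "(avg h ^^ m) (G3 c1 \<mu>1 c2 \<mu>2 c3 \<mu>3) 0"
  have V: "norm ?V \<le> B" using iter_bound[OF s h, of 0 m] B by simp
  have V2: "?V = suminf (cm c1 \<mu>1 h m) + suminf (cm c2 \<mu>2 h m) + suminf (cm c3 \<mu>3 h m)"
    by (simp add: iter_G3[OF s h] G3_0)
  have n1: "summable (\<lambda>k. norm (cm c1 \<mu>1 h m k))" "summable (\<lambda>k. norm (cm c2 \<mu>2 h m k))"
    "summable (\<lambda>k. norm (cm c3 \<mu>3 h m k))" using s by (auto intro: summable_cm)
  have sc1: "summable (cm c1 \<mu>1 h m)" using summable_norm_cancel[OF n1(1)] .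
  note P = suminf_pick[OF sc1, of n]
  have cn: "cm c1 \<mu>1 h m n = c1 n" using z by (simp add: cm_def phi_def)
  define R where "R = (\<Sum>k. if k = n then 0 else cm c1 \<mu>1 h m k)"
  have eqc: "c1 n = ?V - R - suminf (cm c2 \<mu>2 h m) - suminf (cm c3 \<mu>3 h m)"
    using P(1) cn V2 unfolding R_def by simp
  have "norm (c1 n) \<le> norm ?V + norm R + norm (suminf (cm c2 \<mu>2 h m)) + norm (suminf (cm c3 \<mu>3 h m))"
    using norm_triangle_ineq4[of "?V - R - suminf (cm c2 \<mu>2 h m)" "suminf (cm c3 \<mu>3 h m)"]
      norm_triangle_ineq4[of "?V - R" "suminf (cm c2 \<mu>2 h m)"] norm_triangle_ineq4[of "?V" R]
    unfolding eqc by linarith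
  moreover have "norm R \<le> (\<Sum>k. if k = n then 0 else norm (c1 k) * norm (phi (\<mu>1 k * h)) ^ m)"
  proof -
    have a: "summable (\<lambda>k. norm (if k = n then 0 else cm c1 \<mu>1 h m k))"
      by (rule summable_comparison_test[OF _ n1(1)]) auto
    have "norm R \<le> (\<Sum>k. norm (if k = n then 0 else cm c1 \<mu>1 h m k))"
      unfolding R_def by (rule summable_norm[OF a])
    also have "\<dots> = (\<Sum>k. if k = n then 0 else norm (c1 k) * norm (phi (\<mu>1 k * h)) ^ m)"
      by (rule suminf_cong) (simp add: cm_def norm_mult norm_power)
    finally show ?thesis .
  qed
  moreover have "norm (suminf (cm c2 \<mu>2 h m)) \<le> (\<Sum>k. norm (c2 k) * norm (phi (\<mu>2 k * h)) ^ m)"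
    using summable_norm[OF n1(2)] by (simp add: cm_def norm_mult norm_power)
  moreover have "norm (suminf (cm c3 \<mu>3 h m)) \<le> (\<Sum>k. norm (c3 k) * norm (phi (\<mu>3 k * h)) ^ m)"
    using summable_norm[OF n1(3)] by (simp add: cm_def norm_mult norm_power)
  ultimately show ?thesis using V by linarith
qed




definition aa :: "real \<Rightarrow> nat \<Rightarrow> real" where "aa p k = real (Suc k) powr (- p)"
definition lam :: "real \<Rightarrow> nat \<Rightarrow> real" where "lam q k = real (Suc k) powr q"

lemma summable_aa: "p > 1 \<Longrightarrow> summable (aa p)"
proof -
  assume "p > 1"
  then have "summable (\<lambda>n. real n powr (- p))" by (simp add: summable_real_powr_iff)
  then have "summable (\<lambda>n. real (n + 1) powr (- p))" by (subst summable_iff_shift)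
  then show ?thesis unfolding aa_def[abs_def] by simp
qed

lemma aa_pos: "aa p k > 0" by (simp add: aa_def)

lemma fpq_sums: "p > 1 \<Longrightarrow> (\<lambda>k. complex_of_real (aa p k) * exp (\<i> * complex_of_real (t * lam q k))) sums fpq p q t"
proof -
  assume p: "p > 1"
  have "summable (\<lambda>k. norm (complex_of_real (aa p k) * exp (\<i> * complex_of_real (t * lam q k))))"
    using summable_aa[OF p] by (simp add: norm_mult norm_exp_i_times aa_pos abs_of_pos)
  then have "summable (\<lambda>k. complex_of_real (aa p k) * exp (\<i> * complex_of_real (t * lam q k)))"
    by (rule summable_norm_cancel)
  then show ?thesis unfolding fpq_def aa_def lam_def by (simp add: summable_sums)
qed

definition bet where "bet p q \<omega> t0 k = \<omega> * complex_of_real (aa p k) * exp (\<i> * complex_of_real (t0 * lam q k))"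

definition c3 :: "real \<Rightarrow> real \<Rightarrow> nat \<Rightarrow> complex" where
  "c3 g0 D k = (if k = 0 then - complex_of_real g0 else if k = 1 then - complex_of_real D / (2 * \<i>)
     else if k = 2 then complex_of_real D / (2 * \<i>) else 0)"
definition mu3 :: "real \<Rightarrow> nat \<Rightarrow> real" where
  "mu3 l k = (if k = 0 then - l else if k = 1 then 1 - l else - 1 - l)"

lemma rep:
  assumes p: "p > 1"
  shows "complex_of_real (Re (\<omega> * fpq p q (t0 + s)) - Re (\<omega> * fpq p q t0) - D * sin s) * E (- l) s =
    G3 (\<lambda>k. bet p q \<omega> t0 k / 2) (\<lambda>k. lam q k - l) (\<lambda>k. cnj (bet p q \<omega> t0 k) / 2) (\<lambda>k. - lam q k - l)
       (c3 (Re (\<omega> * fpq p q t0)) D) (mu3 l) s"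
proof -
  define X where "X = \<omega> * fpq p q (t0 + s)"
  have "(\<lambda>k. \<omega> * (complex_of_real (aa p k) * exp (\<i> * complex_of_real ((t0 + s) * lam q k)))) sums X"
    unfolding X_def by (intro sums_mult fpq_sums p)
  moreover have "\<omega> * (complex_of_real (aa p k) * exp (\<i> * complex_of_real ((t0 + s) * lam q k)))
     = bet p q \<omega> t0 k * exp (\<i> * complex_of_real (s * lam q k))" for k
    by (simp add: bet_def exp_add[symmetric] algebra_simps)
  ultimately have sX: "(\<lambda>k. bet p q \<omega> t0 k * exp (\<i> * complex_of_real (s * lam q k))) sums X" by simp
  have s1: "(\<lambda>k. bet p q \<omega> t0 k / 2 * E (lam q k - l) s) sums (X * E (- l) s / 2)"
  proof -
    have "(\<lambda>k. bet p q \<omega> t0 k * exp (\<i> * complex_of_real (s * lam q k)) * (E (- l) s / 2)) sums (X * (E (- l) s / 2))"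
      by (rule sums_mult2[OF sX])
    moreover have idn: "bet p q \<omega> t0 k * exp (\<i> * complex_of_real (s * lam q k)) * (E (- l) s / 2) = bet p q \<omega> t0 k / 2 * E (lam q k - l) s" for k
      by (simp add: E_def exp_add[symmetric] algebra_simps)
    ultimately show ?thesis by (simp only: idn times_divide_eq_right)
  qed
  have s2: "(\<lambda>k. cnj (bet p q \<omega> t0 k) / 2 * E (- lam q k - l) s) sums (cnj X * E (- l) s / 2)"
  proof -
    have "(\<lambda>k. cnj (bet p q \<omega> t0 k * exp (\<i> * complex_of_real (s * lam q k)))) sums cnj X"
      using sX by (simp only: sums_cnj)
    then have "(\<lambda>k. cnj (bet p q \<omega> t0 k * exp (\<i> * complex_of_real (s * lam q k))) * (E (- l) s / 2)) sums (cnj X * (E (- l) s / 2))"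
      by (rule sums_mult2)
    moreover have idn: "cnj (bet p q \<omega> t0 k * exp (\<i> * complex_of_real (s * lam q k))) * (E (- l) s / 2) = cnj (bet p q \<omega> t0 k) / 2 * E (- lam q k - l) s" for k
    proof -
      have "cnj (exp (\<i> * complex_of_real (s * lam q k))) * E (- l) s = 
         exp (- (\<i> * complex_of_real (s * lam q k))) * exp (\<i> * complex_of_real (- l * s))"
        by (simp add: E_def exp_cnj)
      also have "\<dots> = exp (- (\<i> * complex_of_real (s * lam q k)) + \<i> * complex_of_real (- l * s))"
        by (rule exp_add[symmetric])
      also have "\<dots> = E (- lam q k - l) s" unfolding E_def
        by (rule arg_cong[where f=exp]) (simp add: algebra_simps)
      finally show ?thesis by simp
    qed
    ultimately show ?thesis by (simp only: idn times_divide_eq_right)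
  qed
  have s3: "ser (c3 (Re (\<omega> * fpq p q t0)) D) (mu3 l) s = (\<Sum>k<3. c3 (Re (\<omega> * fpq p q t0)) D k * E (mu3 l k) s)"
    unfolding ser_def by (rule suminf_finite) (auto simp: c3_def)
  have sin: "complex_of_real (sin s) = (exp (\<i> * complex_of_real s) - exp (- (\<i> * complex_of_real s))) / (2 * \<i>)"
    by (simp add: sin_of_real[symmetric] sin_exp_eq)
  have re: "complex_of_real (Re X) = (X + cnj X) / 2"
    by (simp add: complex_add_cnj)
  have "complex_of_real (Re (\<omega> * fpq p q (t0 + s)) - Re (\<omega> * fpq p q t0) - D * sin s) * E (- l) s
     = (X + cnj X) / 2 * E (- l) s - complex_of_real (Re (\<omega> * fpq p q t0)) * E (-l) s - complex_of_real D * complex_of_real (sin s) * E (-l) s"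
    unfolding X_def[symmetric] re[symmetric] by (simp add: algebra_simps)
  also have "\<dots> = X * E (- l) s / 2 + cnj X * E (- l) s / 2 + (\<Sum>k<3. c3 (Re (\<omega> * fpq p q t0)) D k * E (mu3 l k) s)"
    unfolding sin by (simp add: c3_def mu3_def E_def numeral_3_eq_3 field_simps exp_add[symmetric] exp_diff[symmetric])
  finally show ?thesis
    unfolding G3_def ser_def s3[unfolded ser_def] sums_unique[OF s1, symmetric] sums_unique[OF s2, symmetric] .
qed




lemma phi_pow_bound:
  assumes "\<bar>y\<bar> \<ge> Y" "Y > 0"
  shows "norm (phi y) ^ m \<le> (2 / Y) ^ m"
proof -
  have "norm (phi y) \<le> 2 / \<bar>y\<bar>" using assms by (intro norm_phi_le2) auto
  also have "\<dots> \<le> 2 / Y" using assms by (intro divide_left_mono) auto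
  finally show ?thesis by (intro power_mono) auto
qed

lemma inv_pow_le_powr:
  assumes "x \<ge> 1" "real m \<ge> r"
  shows "(1 / x) ^ m \<le> x powr (- r)"
proof -
  have "(1 / x) ^ m = x powr (- real m)"
    using assms by (simp add: powr_minus powr_realpow divide_inverse power_inverse)
  also have "\<dots> \<le> x powr (- r)" using assms by (intro powr_mono) auto
  finally show ?thesis .
qed

lemma pow_le_self: "0 \<le> c \<Longrightarrow> c \<le> 1 \<Longrightarrow> m \<ge> 1 \<Longrightarrow> c ^ m \<le> (c::real)"
  using power_decreasing[of 1 m c] by simp

lemma mul_powr_self: "x > 0 \<Longrightarrow> x * x powr (q - 1) = x powr (q::real)"
  using powr_add[of x 1 "q - 1"] by simp

lemma gap:
  assumes "q \<ge> 1"
  shows "\<bar>lam q k - lam q n\<bar> \<ge> \<bar>real k - real n\<bar> * real (Suc n) powr (q - 1)"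
proof -
  define x where "x = real (Suc k)"
  define y where "y = real (Suc n)"
  have x: "x > 0" and y: "y > 0" by (auto simp: x_def y_def)
  have lx: "lam q k = x * x powr (q - 1)" and ly: "lam q n = y * y powr (q - 1)"
    using x y by (simp_all add: lam_def x_def y_def mul_powr_self)
  have d: "\<bar>real k - real n\<bar> = \<bar>x - y\<bar>" by (simp add: x_def y_def)
  show ?thesis
  proof (cases "k \<ge> n")
    case True
    then have "x \<ge> y" by (simp add: x_def y_def)
    then have "x powr (q - 1) \<ge> y powr (q - 1)" using assms y by (intro powr_mono2) auto
    then have "x * x powr (q - 1) \<ge> x * y powr (q - 1)" using x by (intro mult_left_mono) auto
    then show ?thesis unfolding lx ly d y_def[symmetric] using \<open>x \<ge> y\<close> by (simp add: algebra_simps)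
  next
    case False
    then have "x \<le> y" by (simp add: x_def y_def)
    then have "x powr (q - 1) \<le> y powr (q - 1)" using assms x by (intro powr_mono2) auto
    then have "x * x powr (q - 1) \<le> x * y powr (q - 1)" using x by (intro mult_left_mono) auto
    then show ?thesis unfolding lx ly d y_def[symmetric] using \<open>x \<le> y\<close> by (simp add: algebra_simps)
  qed
qed

lemma prod_dist:
  assumes "k \<noteq> n"
  shows "real (Suc k) * \<bar>real k - real n\<bar> \<ge> real (Suc n) / 2"
proof (cases "k > n")
  case True
  then have "\<bar>real k - real n\<bar> \<ge> 1" by simp
  then have "real (Suc k) * \<bar>real k - real n\<bar> \<ge> real (Suc k)"
    by (metis mult_left_mono mult.right_neutral of_nat_0_le_iff)
  moreover have "real (Suc n) / 2 \<le> real (Suc k)" using True by simp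
  ultimately show ?thesis by linarith
next
  case False
  then have kn: "k < n" using assms by simp
  show ?thesis
  proof (cases "2 * real (Suc k) \<ge> real (Suc n)")
    case True
    have "\<bar>real k - real n\<bar> \<ge> 1" using kn by simp
    then have "real (Suc k) * \<bar>real k - real n\<bar> \<ge> real (Suc k)"
      by (metis mult_left_mono mult.right_neutral of_nat_0_le_iff)
    then show ?thesis by (rule order_trans[rotated]) (use True in simp)
  next
    case F: False
    then have "\<bar>real k - real n\<bar> \<ge> real (Suc n) / 2" using kn by simp
    moreover have "real (Suc k) \<ge> 1" by simp
    ultimately have "real (Suc k) * \<bar>real k - real n\<bar> \<ge> 1 * (real (Suc n) / 2)"
      by (intro mult_mono) auto
    then show ?thesis by simp
  qed
qed

definition Zc where "Zc = (\<Sum>k. aa 2 k)"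

lemma dist_sum:
  "summable (\<lambda>k. if k = n then 0 else \<bar>real k - real n\<bar> powr (-2))"
  "(\<Sum>k. if k = n then 0 else \<bar>real k - real n\<bar> powr (-2)) \<le> 2 * Zc"
proof -
  define f where "f = (\<lambda>k. if k = n then 0 else \<bar>real k - real n\<bar> powr (-2))"
  have sh: "(\<lambda>k. f (k + Suc n)) = aa 2"
    by (rule ext) (simp add: f_def aa_def)
  have sZ: "summable (aa 2)" by (rule summable_aa) simp
  then have "summable (\<lambda>k. f (k + Suc n))" unfolding sh .
  then have "summable f" by (simp only: summable_iff_shift)
  then show s: "summable (\<lambda>k. if k = n then 0 else \<bar>real k - real n\<bar> powr (-2))"
    unfolding f_def .
  have nn: "aa 2 k \<ge> 0" for k using aa_pos[of 2 k] by simp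
  have "(\<Sum>i<Suc n. f i) = (\<Sum>i<n. f i)" by (simp add: f_def)
  also have "\<dots> = (\<Sum>i<n. f (n - Suc i))" by (rule sum.nat_diff_reindex[symmetric])
  also have "\<dots> = (\<Sum>i<n. aa 2 i)"
    by (rule sum.cong) (auto simp: f_def aa_def of_nat_diff add.commute)
  also have "\<dots> \<le> Zc" unfolding Zc_def by (rule sum_le_suminf[OF sZ]) (use nn in auto)
  finally have A: "(\<Sum>i<Suc n. f i) \<le> Zc" .
  have "suminf f = (\<Sum>k. f (k + Suc n)) + (\<Sum>i<Suc n. f i)"
    by (rule suminf_split_initial_segment) (use s in \<open>simp add: f_def\<close>)
  also have "(\<Sum>k. f (k + Suc n)) = Zc" unfolding sh Zc_def ..
  finally show "(\<Sum>k. if k = n then 0 else \<bar>real k - real n\<bar> powr (-2)) \<le> 2 * Zc"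
    using A unfolding f_def by simp
qed




definition Sc where "Sc p = (\<Sum>k. aa p k)"
definition Mc where "Mc p = 2 powr (p + 6) * Zc + 16 * Sc p + 4"
definition mc :: "real \<Rightarrow> nat" where "mc p = nat \<lceil>p\<rceil> + 2"
definition hh where "hh p q n = Mc p * real (Suc n) powr (1 - q)"

lemma Zc_nn: "Zc \<ge> 0"
  unfolding Zc_def by (rule suminf_nonneg) (auto intro: summable_aa less_imp_le[OF aa_pos])
lemma Sc_nn: "p > 1 \<Longrightarrow> Sc p \<ge> 0"
  unfolding Sc_def by (rule suminf_nonneg) (auto intro: summable_aa less_imp_le[OF aa_pos])
lemma Mc_ge: "p > 1 \<Longrightarrow> Mc p \<ge> 4"
  using Zc_nn Sc_nn[of p] unfolding Mc_def by (simp add: add_nonneg_nonneg)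
lemma mc_ge: "p > 0 \<Longrightarrow> real (mc p) \<ge> p + 2"
  unfolding mc_def by linarith
lemma mc_ge1: "mc p \<ge> 1" unfolding mc_def by simp
lemma hh_pos: "p > 1 \<Longrightarrow> hh p q n > 0"
  using Mc_ge[of p] unfolding hh_def by simp

lemma norm_bet: "norm \<omega> = 1 \<Longrightarrow> norm (bet p q \<omega> t0 k) = aa p k"
  unfolding bet_def using aa_pos[of p k] by (simp add: norm_mult norm_exp_i_times)

lemma powr_cancel: "x > 0 \<Longrightarrow> x powr (q - 1) * x powr (1 - q) = (1::real)"
  by (simp add: powr_add[symmetric])

lemma key:
  assumes p: "p > 1" and q: "q \<ge> p + 1" and w: "norm \<omega> = 1"
    and n: "real (Suc n) \<ge> 16 * (\<bar>Re (\<omega> * fpq p q t0)\<bar> + \<bar>D\<bar>) + 2"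
    and B: "\<forall>s\<in>{0..real (mc p) * hh p q n}.
      \<bar>Re (\<omega> * fpq p q (t0 + s)) - Re (\<omega> * fpq p q t0) - D * sin s\<bar> \<le> B"
  shows "aa p n \<le> 4 * B"
proof -
  define g0 where "g0 = Re (\<omega> * fpq p q t0)"
  define N1 where "N1 = real (Suc n)"
  define h where "h = hh p q n"
  define m where "m = mc p"
  define M where "M = Mc p"
  define l where "l = lam q n"
  define c1 where "c1 = (\<lambda>k. bet p q \<omega> t0 k / 2)"
  define \<mu>1 where "\<mu>1 = (\<lambda>k. lam q k - l)"
  define c2 where "c2 = (\<lambda>k. cnj (bet p q \<omega> t0 k) / 2)"
  define \<mu>2 where "\<mu>2 = (\<lambda>k. - lam q k - l)"
  have N1: "N1 \<ge> 2" unfolding N1_def by (rule order_trans[OF _ n]) simp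
  have M4: "M \<ge> 4" unfolding M_def using Mc_ge[OF p] .
  have hpos: "h > 0" unfolding h_def using hh_pos[OF p] .
  have m1: "m \<ge> 1" unfolding m_def using mc_ge1 .
  have mp: "real m \<ge> p + 2" unfolding m_def using mc_ge[of p] p by simp
  have aan: "aa p n = N1 powr (- p)" by (simp add: aa_def N1_def)
  have aapos: "aa p k > 0" for k by (rule aa_pos)
  have nc1: "norm (c1 k) = aa p k / 2" for k unfolding c1_def using norm_bet[OF w] by (simp add: norm_divide)
  have nc2: "norm (c2 k) = aa p k / 2" for k unfolding c2_def using norm_bet[OF w] by (simp add: norm_divide)
  have sa: "summable (aa p)" by (rule summable_aa[OF p])
  have s1: "summable (\<lambda>k. norm (c1 k))" unfolding nc1 by (intro summable_divide sa)
  have s2: "summable (\<lambda>k. norm (c2 k))" unfolding nc2 by (intro summable_divide sa)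
  have s3: "summable (\<lambda>k. norm (c3 g0 D k))"
    by (rule summable_finite[of "{..<3}"]) (auto simp: c3_def)
  have z: "\<mu>1 n = 0" by (simp add: \<mu>1_def l_def)
  have Bnd: "\<forall>u\<in>{0..real m * h}. norm (G3 c1 \<mu>1 c2 \<mu>2 (c3 g0 D) (mu3 l) u) \<le> B"
  proof
    fix u assume "u \<in> {0..real m * h}"
    then have "\<bar>Re (\<omega> * fpq p q (t0 + u)) - Re (\<omega> * fpq p q t0) - D * sin u\<bar> \<le> B"
      using B unfolding m_def h_def by blast
    then show "norm (G3 c1 \<mu>1 c2 \<mu>2 (c3 g0 D) (mu3 l) u) \<le> B"
      unfolding c1_def \<mu>1_def c2_def \<mu>2_def g0_def
        rep[OF p, of \<omega> q t0 u D l, symmetric]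
      by (simp only: norm_mult norm_E norm_of_real mult_1_right)
  qed
  note X = extract_lem[OF s1 s2 s3 hpos z Bnd]
  define Ta where "Ta = (\<Sum>k. if k = n then 0 else norm (c1 k) * norm (phi (\<mu>1 k * h)) ^ m)"
  define Tb where "Tb = (\<Sum>k. norm (c2 k) * norm (phi (\<mu>2 k * h)) ^ m)"
  define Tc where "Tc = (\<Sum>k. norm (c3 g0 D k) * norm (phi (mu3 l k * h)) ^ m)"
  have X': "aa p n / 2 \<le> B + Ta + Tb + Tc" using X unfolding Ta_def Tb_def Tc_def nc1 .
  have hN: "h = M * N1 powr (1 - q)" by (simp add: h_def hh_def M_def N1_def)
  have lh: "l * h = M * N1"
  proof -
    have "l * h = M * (N1 * (N1 powr (q - 1) * N1 powr (1 - q)))"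
      using mul_powr_self[of N1 q] N1 by (simp add: hN l_def lam_def N1_def mult_ac)
    then show ?thesis using powr_cancel[of N1 q] N1 by simp
  qed
  have phile1: "norm (phi y) ^ m \<le> 1" for y
    by (rule power_le_one) (auto intro: norm_phi_le1)
  have Ta_le: "Ta \<le> aa p n / 32"
  proof -
    define K where "K = 2 powr p * aa p n / M"
    have pt: "(if k = n then 0 else norm (c1 k) * norm (phi (\<mu>1 k * h)) ^ m)
        \<le> K * (if k = n then 0 else \<bar>real k - real n\<bar> powr (-2))" for k
    proof (cases "k = n")
      case True then show ?thesis by simp
    next
      case False
      define d where "d = \<bar>real k - real n\<bar>"
      have d1: "d \<ge> 1" using False unfolding d_def by (cases "k < n") auto
      have "\<bar>\<mu>1 k\<bar> \<ge> d * N1 powr (q - 1)"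
        using gap[of q k n] q p unfolding \<mu>1_def l_def d_def N1_def by simp
      then have "\<bar>\<mu>1 k\<bar> * h \<ge> d * N1 powr (q - 1) * h"
        using hpos by (intro mult_right_mono) auto
      also have "d * N1 powr (q - 1) * h = d * M"
        using powr_cancel[of N1 q] N1 unfolding hN by (simp add: mult_ac)
      finally have g: "\<bar>\<mu>1 k * h\<bar> \<ge> d * M" using hpos by (simp add: abs_mult)
      have "norm (phi (\<mu>1 k * h)) ^ m \<le> (2 / (d * M)) ^ m"
        by (rule phi_pow_bound[OF g]) (use d1 M4 in auto)
      also have "\<dots> = (2 / M) ^ m * (1 / d) ^ m" by (simp add: power_mult_distrib[symmetric] mult.commute)
      also have "\<dots> \<le> (2 / M) * d powr (- (p + 2))"
        by (intro mult_mono pow_le_self inv_pow_le_powr) (use M4 m1 d1 mp in auto)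
      also have "\<dots> = (2 / M) * (d powr (- p) * d powr (-2))"
        using d1 by (simp add: powr_add[symmetric])
      finally have ph: "norm (phi (\<mu>1 k * h)) ^ m \<le> (2 / M) * (d powr (- p) * d powr (-2))" .
      have "aa p k * d powr (- p) = (real (Suc k) * d) powr (- p)"
        unfolding aa_def by (rule powr_mult[symmetric])
      also have "\<dots> \<le> (N1 / 2) powr (- p)"
        by (rule powr_mono2') (use prod_dist[OF False] p N1 in \<open>simp_all add: d_def N1_def\<close>)
      also have "(N1 / 2) powr (- p) = N1 powr (- p) / 2 powr (- p)" by (rule powr_divide)
      also have "\<dots> = N1 powr (- p) * 2 powr p" by (simp add: powr_minus divide_inverse)
      also have "\<dots> = 2 powr p * aa p n" by (simp add: aan)
      finally have ad: "aa p k * d powr (- p) \<le> 2 powr p * aa p n" .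
      have "norm (c1 k) * norm (phi (\<mu>1 k * h)) ^ m \<le> aa p k / 2 * ((2 / M) * (d powr (- p) * d powr (-2)))"
        unfolding nc1 using aapos[of k] by (intro mult_left_mono ph) auto
      also have "\<dots> = (aa p k * d powr (- p)) * d powr (-2) / M" using M4 by simp
      also have "\<dots> \<le> (2 powr p * aa p n) * d powr (-2) / M"
        using M4 by (intro divide_right_mono mult_right_mono ad) auto
      also have "\<dots> = K * d powr (-2)" unfolding K_def by simp
      finally show ?thesis using False unfolding d_def by simp
    qed
    have sL: "summable (\<lambda>k. if k = n then 0 else norm (c1 k) * norm (phi (\<mu>1 k * h)) ^ m)"
      by (rule summable_comparison_test[OF _ s1])
         (auto intro!: exI[of _ 0] mult_left_le phile1)
    have "Ta \<le> (\<Sum>k. K * (if k = n then 0 else \<bar>real k - real n\<bar> powr (-2)))"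
      unfolding Ta_def by (rule suminf_le[OF pt sL]) (intro summable_mult dist_sum(1))
    also have "\<dots> = K * (\<Sum>k. if k = n then 0 else \<bar>real k - real n\<bar> powr (-2))"
      by (rule suminf_mult[OF dist_sum(1)])
    also have "\<dots> \<le> K * (2 * Zc)"
      using dist_sum(2) M4 aapos[of n] unfolding K_def by (intro mult_left_mono) auto
    also have "\<dots> \<le> aa p n / 32"
    proof -
      have "2 powr (p + 6) = 64 * 2 powr p" by (simp add: powr_add)
      then have "M \<ge> 64 * 2 powr p * Zc" unfolding M_def Mc_def using Sc_nn[OF p] by simp
      then have "2 powr p * (2 * Zc) * 32 \<le> M" by simp
      then have "2 powr p * aa p n * (2 * Zc) * 32 \<le> aa p n * M"
        using aapos[of n] by (simp add: mult_left_mono mult_ac)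
      then show ?thesis unfolding K_def using M4 by (simp add: field_simps)
    qed
    finally show ?thesis .
  qed
  have Tb_le: "Tb \<le> aa p n / 16"
  proof -
    have pt: "norm (c2 k) * norm (phi (\<mu>2 k * h)) ^ m \<le> aa p k * (aa p n / M)" for k
    proof -
      have "lam q k \<ge> 0" by (simp add: lam_def)
      moreover have "l \<ge> 0" by (simp add: l_def lam_def)
      ultimately have e: "\<bar>\<mu>2 k * h\<bar> = (lam q k + l) * h" using hpos
        by (simp add: \<mu>2_def abs_mult)
      have "(lam q k + l) * h \<ge> l * h" using hpos \<open>lam q k \<ge> 0\<close> by (intro mult_right_mono) auto
      then have "\<bar>\<mu>2 k * h\<bar> \<ge> l * h" unfolding e .
      then have g: "\<bar>\<mu>2 k * h\<bar> \<ge> M * N1" unfolding lh .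
      have "norm (phi (\<mu>2 k * h)) ^ m \<le> (2 / (M * N1)) ^ m"
        by (rule phi_pow_bound[OF g]) (use N1 M4 in auto)
      also have "\<dots> = (2 / M) ^ m * (1 / N1) ^ m" by (simp add: power_mult_distrib[symmetric])
      also have "\<dots> \<le> (2 / M) * N1 powr (- p)"
        by (intro mult_mono pow_le_self inv_pow_le_powr) (use M4 m1 N1 mp in auto)
      finally have "norm (phi (\<mu>2 k * h)) ^ m \<le> 2 * aa p n / M" by (simp add: aan)
      then have "norm (c2 k) * norm (phi (\<mu>2 k * h)) ^ m \<le> aa p k / 2 * (2 * aa p n / M)"
        unfolding nc2 using aapos[of k] by (intro mult_left_mono) auto
      then show ?thesis by simp
    qed
    have sL: "summable (\<lambda>k. norm (c2 k) * norm (phi (\<mu>2 k * h)) ^ m)"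
      by (rule summable_comparison_test[OF _ s2])
         (auto intro!: exI[of _ 0] mult_left_le phile1)
    have "Tb \<le> (\<Sum>k. aa p k * (aa p n / M))"
      unfolding Tb_def by (rule suminf_le[OF pt sL]) (intro summable_mult2 sa)
    also have "\<dots> = Sc p * (aa p n / M)" unfolding Sc_def by (rule suminf_mult2[OF sa, symmetric])
    also have "\<dots> \<le> aa p n / 16"
    proof -
      have "16 * Sc p \<le> M" unfolding M_def Mc_def using Zc_nn by simp
      then have "Sc p * aa p n * 16 \<le> aa p n * M" using aapos[of n]
        by (metis mult.commute mult_le_cancel_left_pos mult.left_commute)
      then show ?thesis using M4 by (simp add: field_simps)
    qed
    finally show ?thesis .
  qed
  have Tc_le: "Tc \<le> aa p n / 16"
  proof -
    have l2: "l \<ge> N1"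
    proof -
      have "N1 powr 1 \<le> N1 powr q" using N1 q p by (intro powr_mono) auto
      then show ?thesis using N1 by (simp add: l_def lam_def N1_def)
    qed
    have g: "\<bar>mu3 l k * h\<bar> \<ge> M * N1 / 2" if "k < 3" for k
    proof -
      have "\<bar>mu3 l k\<bar> \<ge> l / 2" using l2 N1 by (auto simp: mu3_def)
      then have "\<bar>mu3 l k\<bar> * h \<ge> l / 2 * h" using hpos by (intro mult_right_mono) auto
      then show ?thesis using lh hpos by (simp add: abs_mult)
    qed
    have ph: "norm (phi (mu3 l k * h)) ^ m \<le> aa p n / N1" if "k < 3" for k
    proof -
      have "norm (phi (mu3 l k * h)) ^ m \<le> (2 / (M * N1 / 2)) ^ m"
        by (rule phi_pow_bound[OF g[OF that]]) (use N1 M4 in auto)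
      also have "\<dots> = (4 / M) ^ m * (1 / N1) ^ m" by (simp add: power_mult_distrib[symmetric])
      also have "\<dots> \<le> 1 * N1 powr (- (p + 1))"
        by (intro mult_mono power_le_one inv_pow_le_powr) (use M4 m1 N1 mp in auto)
      also have "\<dots> = aa p n / N1"
      proof -
        have "N1 powr (- p) * N1 powr (- 1) = N1 powr (- (p + 1))"
          using powr_add[of N1 "- p" "- 1"] by (simp add: algebra_simps)
        moreover have "N1 powr (- 1) = inverse N1" using N1 by (simp add: powr_minus)
        ultimately show ?thesis by (simp add: aan divide_inverse)
      qed
      finally show ?thesis .
    qed
    have "Tc = (\<Sum>k<3. norm (c3 g0 D k) * norm (phi (mu3 l k * h)) ^ m)"
      unfolding Tc_def by (rule suminf_finite) (auto simp: c3_def)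
    also have "\<dots> \<le> (\<Sum>k<3. norm (c3 g0 D k) * (aa p n / N1))"
      by (intro sum_mono mult_left_mono ph) auto
    also have "\<dots> = (\<bar>g0\<bar> + \<bar>D\<bar>) * (aa p n / N1)"
      by (simp add: c3_def numeral_3_eq_3 norm_divide norm_mult algebra_simps add_divide_distrib)
    also have "\<dots> \<le> aa p n / 16"
    proof -
      have "(\<bar>g0\<bar> + \<bar>D\<bar>) * 16 \<le> N1" using n unfolding g0_def N1_def by simp
      then have "(\<bar>g0\<bar> + \<bar>D\<bar>) * aa p n * 16 \<le> aa p n * N1" using aapos[of n]
        by (metis mult.commute mult_le_cancel_left_pos mult.left_commute)
      then show ?thesis using N1 by (simp add: field_simps)
    qed
    finally show ?thesis .
  qed
  show ?thesis using X' Ta_le Tb_le Tc_le aapos[of n] by linarith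
qed




lemma hh_le_aa: "p > 1 \<Longrightarrow> q \<ge> p + 1 \<Longrightarrow> hh p q n \<le> Mc p * aa p n"
proof -
  assume p: "p > 1" and q: "q \<ge> p + 1"
  have "real (Suc n) powr (1 - q) \<le> real (Suc n) powr (- p)" using q by (intro powr_mono) auto
  then show ?thesis using Mc_ge[OF p] unfolding hh_def aa_def by (intro mult_left_mono) auto
qed

lemma hh_le_inv: "p > 1 \<Longrightarrow> q \<ge> p + 1 \<Longrightarrow> hh p q n \<le> Mc p / real (Suc n)"
proof -
  assume p: "p > 1" and q: "q \<ge> p + 1"
  have "real (Suc n) powr (1 - q) \<le> real (Suc n) powr (- 1)" using q p by (intro powr_mono) auto
  also have "\<dots> = 1 / real (Suc n)" by (simp add: powr_minus divide_inverse)
  finally have "Mc p * real (Suc n) powr (1 - q) \<le> Mc p * (1 / real (Suc n))"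
    using Mc_ge[OF p] by (intro mult_left_mono) auto
  then show ?thesis unfolding hh_def by simp
qed

lemma exists_big: "\<exists>n. real (Suc n) \<ge> A"
proof
  show "real (Suc (nat \<lceil>A\<rceil>)) \<ge> A" by linarith
qed

lemma NDR:
  assumes p: "p > 1" and q: "q \<ge> p + 1" and w: "norm \<omega> = 1"
  shows "\<not> (\<lambda>s. Re (\<omega> * fpq p q s)) differentiable (at t0)"
proof
  define g where "g = (\<lambda>s. Re (\<omega> * fpq p q s))"
  assume "(\<lambda>s. Re (\<omega> * fpq p q s)) differentiable (at t0)"
  then obtain D where dg: "(g has_real_derivative D) (at t0)"
    unfolding g_def real_differentiable_def by blast
  define H where "H = (\<lambda>s. g (t0 + s) - g t0 - D * sin s)"
  have "((\<lambda>s. g (s + t0)) has_real_derivative D) (at 0)"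
    using DERIV_shift[of g D 0 t0] dg by simp
  then have d1: "((\<lambda>s. g (t0 + s)) has_real_derivative D) (at 0)" by (simp add: add.commute)
  have "(H has_real_derivative (D - 0 - D * cos 0)) (at 0)"
    unfolding H_def by (intro DERIV_diff d1 DERIV_const DERIV_cmult DERIV_sin)
  then have "(H has_real_derivative 0) (at 0)" by simp
  then have "(H has_derivative (*) 0) (at 0)" unfolding has_field_derivative_def .
  then have lim: "\<forall>e>0. \<exists>d>0. \<forall>y. norm (y - 0) < d \<longrightarrow> norm (H y - H 0 - 0 * (y - 0)) \<le> e * norm (y - 0)"
    unfolding has_derivative_at_alt by blast
  define m where "m = real (mc p)"
  define M where "M = Mc p"
  have M4: "M \<ge> 4" unfolding M_def using Mc_ge[OF p] .
  have m1: "m \<ge> 1" unfolding m_def using mc_ge1[of p] by simp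
  define e where "e = 1 / (8 * m * M)"
  have e: "e > 0" unfolding e_def using M4 m1 by simp
  obtain d where d: "d > 0" and hd: "\<And>y. \<bar>y\<bar> < d \<Longrightarrow> \<bar>H y\<bar> \<le> e * \<bar>y\<bar>"
    using lim e by (auto simp: H_def)
  obtain n where n: "real (Suc n) \<ge> 16 * (\<bar>Re (\<omega> * fpq p q t0)\<bar> + \<bar>D\<bar>) + 2 + m * M / d"
    using exists_big by blast
  have mMd: "m * M / d \<ge> 0" using M4 m1 d by simp
  have nN: "real (Suc n) \<ge> 16 * (\<bar>Re (\<omega> * fpq p q t0)\<bar> + \<bar>D\<bar>) + 2"
    using n mMd by linarith
  have mh: "m * hh p q n < d"
  proof -
    have "m * hh p q n \<le> m * (M / real (Suc n))"
      using hh_le_inv[OF p q, of n] m1 unfolding M_def by (intro mult_left_mono) auto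
    also have "\<dots> < d"
    proof -
      have "16 * (\<bar>Re (\<omega> * fpq p q t0)\<bar> + \<bar>D\<bar>) + 2 > 0"
        by (simp add: add_nonneg_pos)
      then have "m * M / d < real (Suc n)" using n by linarith
      then have "m * M < d * real (Suc n)" using d by (simp add: divide_less_eq mult.commute)
      then show ?thesis by (simp add: divide_less_eq mult.commute)
    qed
    finally show ?thesis .
  qed
  have B: "\<forall>s\<in>{0..real (mc p) * hh p q n}.
      \<bar>Re (\<omega> * fpq p q (t0 + s)) - Re (\<omega> * fpq p q t0) - D * sin s\<bar> \<le> e * (m * hh p q n)"
  proof
    fix s assume s: "s \<in> {0..real (mc p) * hh p q n}"
    then have "\<bar>s\<bar> < d" using mh unfolding m_def by auto
    then have "\<bar>H s\<bar> \<le> e * \<bar>s\<bar>" by (rule hd)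
    also have "\<dots> \<le> e * (m * hh p q n)" using s e unfolding m_def by (intro mult_left_mono) auto
    finally show "\<bar>Re (\<omega> * fpq p q (t0 + s)) - Re (\<omega> * fpq p q t0) - D * sin s\<bar> \<le> e * (m * hh p q n)"
      unfolding H_def g_def .
  qed
  have "aa p n \<le> 4 * (e * (m * hh p q n))" by (rule key[OF p q w nN B])
  also have "\<dots> \<le> 4 * (e * (m * (M * aa p n)))"
    using hh_le_aa[OF p q, of n] e m1 unfolding M_def by (intro mult_left_mono) auto
  also have "\<dots> = aa p n / 2" unfolding e_def using M4 m1 by (simp add: field_simps)
  finally show False using aa_pos[of p n] by simp
qed

lemma NLR:
  assumes p: "p > 1" and q: "q > p + 1" and w: "norm \<omega> = 1"
  shows "\<not> lipschitz_at (\<lambda>s. Re (\<omega> * fpq p q s)) t0"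
proof
  assume "lipschitz_at (\<lambda>s. Re (\<omega> * fpq p q s)) t0"
  then obtain L \<eta> where L: "L > 0" and eta: "\<eta> > 0"
    and hL: "\<And>t. t0 - \<eta> < t \<Longrightarrow> t < t0 + \<eta> \<Longrightarrow>
       \<bar>Re (\<omega> * fpq p q t) - Re (\<omega> * fpq p q t0)\<bar> \<le> L * \<bar>t - t0\<bar>"
    unfolding lipschitz_at_def by auto
  have q': "q \<ge> p + 1" using q by simp
  define m where "m = real (mc p)"
  define M where "M = Mc p"
  have M4: "M \<ge> 4" unfolding M_def using Mc_ge[OF p] .
  have m1: "m \<ge> 1" unfolding m_def using mc_ge1[of p] by simp
  define r where "r = q - 1 - p"
  have r: "r > 0" using q unfolding r_def by simp
  define C where "C = 4 * L * m * M"
  have C: "C > 0" unfolding C_def using L M4 m1 by simp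
  obtain n where n: "real (Suc n) \<ge> 16 * (\<bar>Re (\<omega> * fpq p q t0)\<bar> + 0) + 2 + m * M / \<eta> + (C + 1) powr (1 / r)"
    using exists_big by blast
  have mMd: "m * M / \<eta> \<ge> 0" using M4 m1 eta by simp
  have pw: "(C + 1) powr (1 / r) \<ge> 0" by simp
  have pos16: "16 * (\<bar>Re (\<omega> * fpq p q t0)\<bar> + 0) + 2 > 0" by (simp add: add_nonneg_pos)
  have nN: "real (Suc n) \<ge> 16 * (\<bar>Re (\<omega> * fpq p q t0)\<bar> + \<bar>0\<bar>) + 2"
    by (rule order_trans[OF _ n]) (use mMd pw in simp)
  have mh: "m * hh p q n < \<eta>"
  proof -
    have "m * hh p q n \<le> m * (M / real (Suc n))"
      using hh_le_inv[OF p q', of n] m1 unfolding M_def by (intro mult_left_mono) auto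
    also have "\<dots> < \<eta>"
    proof -
      have "m * M / \<eta> < real (Suc n)" using n pw pos16 by linarith
      then have "m * M < \<eta> * real (Suc n)" using eta by (simp add: divide_less_eq mult.commute)
      then show ?thesis by (simp add: divide_less_eq mult.commute)
    qed
    finally show ?thesis .
  qed
  have B: "\<forall>s\<in>{0..real (mc p) * hh p q n}.
      \<bar>Re (\<omega> * fpq p q (t0 + s)) - Re (\<omega> * fpq p q t0) - 0 * sin s\<bar> \<le> L * (m * hh p q n)"
  proof
    fix s assume s: "s \<in> {0..real (mc p) * hh p q n}"
    then have "s < \<eta>" "s \<ge> 0" using mh unfolding m_def by auto
    then have "\<bar>Re (\<omega> * fpq p q (t0 + s)) - Re (\<omega> * fpq p q t0)\<bar> \<le> L * \<bar>(t0 + s) - t0\<bar>"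
      using eta by (intro hL) auto
    also have "\<dots> \<le> L * (m * hh p q n)" using s L unfolding m_def by (intro mult_left_mono) auto
    finally show "\<bar>Re (\<omega> * fpq p q (t0 + s)) - Re (\<omega> * fpq p q t0) - 0 * sin s\<bar> \<le> L * (m * hh p q n)"
      by simp
  qed
  define N1 where "N1 = real (Suc n)"
  have N1: "N1 \<ge> 1" unfolding N1_def by simp
  have "aa p n \<le> 4 * (L * (m * hh p q n))" by (rule key[OF p q' w nN B])
  also have "\<dots> = C * (N1 powr (- p) * N1 powr (- r))"
  proof -
    have "N1 powr (- p) * N1 powr (- r) = N1 powr (1 - q)"
      using N1 by (simp add: powr_add[symmetric] r_def)
    then show ?thesis unfolding C_def hh_def M_def N1_def by (simp add: mult_ac)
  qed
  finally have f1: "N1 powr (- p) * 1 \<le> N1 powr (- p) * (C * N1 powr (- r))"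
    by (simp add: aa_def N1_def mult_ac)
  have "0 < N1 powr (- p)" using N1 by simp
  then have f2: "1 \<le> C * N1 powr (- r)" using f1 mult_le_cancel_left_pos by blast
  have inv: "N1 powr r * N1 powr (- r) = 1" using N1 by (simp add: powr_add[symmetric])
  have "N1 powr r * 1 \<le> N1 powr r * (C * N1 powr (- r))"
    using f2 by (intro mult_left_mono) auto
  also have "\<dots> = C * (N1 powr r * N1 powr (- r))" by (simp only: mult_ac)
  finally have A: "N1 powr r \<le> C" unfolding inv by simp
  have "(C + 1) powr (1 / r) \<le> N1" using n mMd pos16 unfolding N1_def by linarith
  then have "((C + 1) powr (1 / r)) powr r \<le> N1 powr r" using r by (intro powr_mono2) auto
  also have "((C + 1) powr (1 / r)) powr r = C + 1" using r C by (simp add: powr_powr)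
  finally show False using A by simp
qed


lemma fpq_ser: "p > 1 \<Longrightarrow> fpq p q = ser (\<lambda>k. complex_of_real (aa p k)) (lam q)"
  unfolding fpq_def ser_def E_def aa_def lam_def by (simp add: fun_eq_iff mult.commute)

lemma lip_Re:
  assumes "lipschitz_at (fpq p q) t"
  shows "lipschitz_at (\<lambda>s. Re (1 * fpq p q s)) t"
proof -
  from assms obtain L \<eta> where "L > 0" "\<eta> > 0"
    and h: "\<forall>s. t - \<eta> < s \<and> s < t + \<eta> \<longrightarrow> norm (fpq p q s - fpq p q t) \<le> L * \<bar>s - t\<bar>"
    unfolding lipschitz_at_def by blast
  have "\<forall>s. t - \<eta> < s \<and> s < t + \<eta> \<longrightarrow> norm (Re (1 * fpq p q s) - Re (1 * fpq p q t)) \<le> L * \<bar>s - t\<bar>"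
  proof (intro allI impI)
    fix s assume "t - \<eta> < s \<and> s < t + \<eta>"
    then have "norm (fpq p q s - fpq p q t) \<le> L * \<bar>s - t\<bar>" using h by blast
    moreover have "norm (Re (1 * fpq p q s) - Re (1 * fpq p q t)) \<le> norm (fpq p q s - fpq p q t)"
      using abs_Re_le_cmod[of "fpq p q s - fpq p q t"] by simp
    ultimately show "norm (Re (1 * fpq p q s) - Re (1 * fpq p q t)) \<le> L * \<bar>s - t\<bar>" by linarith
  qed
  then show ?thesis unfolding lipschitz_at_def using \<open>L > 0\<close> \<open>\<eta> > 0\<close> by blast
qed

theorem mainTheorem8:
  fixes p q :: real
  assumes "p > 1" and "q \<ge> p + 1"
  shows "continuous_on UNIV (fpq p q)
       \<and> continuous_on UNIV (\<lambda>t. Re (fpq p q t))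
       \<and> continuous_on UNIV (\<lambda>t. Im (fpq p q t))
       \<and> (\<forall>t. \<not> (fpq p q) differentiable (at t))
       \<and> (\<forall>t. \<not> (\<lambda>s. Re (fpq p q s)) differentiable (at t))
       \<and> (\<forall>t. \<not> (\<lambda>s. Im (fpq p q s)) differentiable (at t))
       \<and> (q > p + 1 \<longrightarrow>
            (\<forall>t. \<not> lipschitz_at (fpq p q) t
               \<and> \<not> lipschitz_at (\<lambda>s. Re (fpq p q s)) t
               \<and> \<not> lipschitz_at (\<lambda>s. Im (fpq p q s)) t))"
proof -
  note p = assms(1) and q = assms(2)
  have sm: "summable (\<lambda>k. norm (complex_of_real (aa p k)))"
    using summable_aa[OF p] aa_pos[of p] by (simp add: abs_of_pos)
  have c: "continuous_on UNIV (fpq p q)" unfolding fpq_ser[OF p] by (rule cont_ser[OF sm])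
  have cRe: "continuous_on UNIV (\<lambda>t. Re (fpq p q t))" using c by (rule continuous_on_Re)
  have cIm: "continuous_on UNIV (\<lambda>t. Im (fpq p q t))" using c by (rule continuous_on_Im)
  have eRe: "(\<lambda>s. Re (fpq p q s)) = (\<lambda>s. Re (1 * fpq p q s))" by simp
  have eIm: "(\<lambda>s. Im (fpq p q s)) = (\<lambda>s. Re ((- \<i>) * fpq p q s))" by simp
  have w1: "norm (1::complex) = 1" by simp
  have wi: "norm (- \<i>) = 1" by simp
  have nRe: "\<not> (\<lambda>s. Re (fpq p q s)) differentiable (at t)" for t
    unfolding eRe by (rule NDR[OF p q w1])
  have nIm: "\<not> (\<lambda>s. Im (fpq p q s)) differentiable (at t)" for t
    unfolding eIm by (rule NDR[OF p q wi])
  have nf: "\<not> (fpq p q) differentiable (at t)" for t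
  proof
    assume "(fpq p q) differentiable (at t)"
    then obtain f' where "(fpq p q has_derivative f') (at t)" unfolding differentiable_def by blast
    then have "((\<lambda>s. Re (fpq p q s)) has_derivative (\<lambda>x. Re (f' x))) (at t)"
      by (rule has_derivative_Re)
    then have "(\<lambda>s. Re (fpq p q s)) differentiable (at t)" unfolding differentiable_def by blast
    then show False using nRe by blast
  qed
  have lip: "\<forall>t. \<not> lipschitz_at (fpq p q) t
               \<and> \<not> lipschitz_at (\<lambda>s. Re (fpq p q s)) t
               \<and> \<not> lipschitz_at (\<lambda>s. Im (fpq p q s)) t" if q2: "q > p + 1"
  proof (intro allI conjI)
    fix t
    show lRe: "\<not> lipschitz_at (\<lambda>s. Re (fpq p q s)) t"
      unfolding eRe by (rule NLR[OF p q2 w1])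
    show "\<not> lipschitz_at (\<lambda>s. Im (fpq p q s)) t"
      unfolding eIm by (rule NLR[OF p q2 wi])
    show "\<not> lipschitz_at (fpq p q) t"
      using lip_Re[of p q t] NLR[OF p q2 w1, of t] by blast
  qed
  show ?thesis using c cRe cIm nf nRe nIm lip by blast
qed

end
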